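(* Let $G=\{1,\dots,n\}$ be a set of generating units with marginal costs $C_1<\dots<C_n$, capacities $\overline P_g\ge 0$, up/down balancing costs $C^{\mathrm u}_g, C^{\mathrm d}_g\in\mathbb{R}$ and balancing limits $R^{\mathrm u}_g,R^{\mathrm d}_g\ge 0$. Let $B$ be a finite set of nodes, $\Lambda$ a finite set of lines with origin $o(l)\in B$, end $e(l)\in B$ and capacity $\overline F_l\ge0$, $G(b)\subseteq G$ the units at node $b$ (the sets $G(b)$ partitioning $G$), and $D(b)$ the loads at node $b$. Let data $\{(\mathbf x_i,(L_{di})_{d})\}_{i=1}^N$ be given with $\mathbf x_i\in\mathbb{R}^p$ and $L_{di}\in\mathbb{R}$. For each $i$ and $\widehat L\in\mathbb R$ define the realized-cost set $T_i(p)$ as the set of $(r^{\mathrm u},r^{\mathrm d},f)\in\mathbb R^n_{\ge0}\times\mathbb R^n_{\ge0}\times\mathbb R^{\Lambda}$ with $0\le p_g+r^{\mathrm u}_g-r^{\mathrm d}_g\le\overline P_g$, $r^{\mathrm u}_g\le R^{\mathrm u}_g$, $r^{\mathrm d}_g\le R^{\mathrm d}_g$ for all $g$, $\sum_{g\in G(b)}(p_g+r^{\mathrm u}_g-r^{\mathrm d}_g)=\sum_{d\in D(b)}L_{di}+\sum_{l:o(l)=b}f_l-\sum_{l:e(l)=b}f_l$ for all $b\in B$, and $|f_l|\le\overline F_l$ for all $l$. (Bilevel problem) Minimize over $\mathbf q\in\mathbb R^p$ and $(p_{\cdot i},r^{\mathrm u}_{\cdot i},r^{\mathrm d}_{\cdot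 i},f_{\cdot i})_{i=1}^N$ the objective $\frac1N\sum_{i=1}^N\sum_{g}(C_gp_{gi}+C^{\mathrm u}_gr^{\mathrm u}_{gi}-C^{\mathrm d}_gr^{\mathrm d}_{gi})$ subject to $(r^{\mathrm u}_{\cdot i},r^{\mathrm d}_{\cdot i},f_{\cdot i})\in T_i(p_{\cdot i})$ and $p_{\cdot i}\in\arg\min\{\sum_gC_gp_g:\sum_gp_g=\mathbf q^\top\mathbf x_i,\ 0\le p_g\le\overline P_g\ \forall g\}$ for all $i$. (Single-level MILP) Minimize the same objective over the same variables together with $u_{gi}\in\{0,1\}$, subject to $(r^{\mathrm u}_{\cdot i},r^{\mathrm d}_{\cdot i},f_{\cdot i})\in T_i(p_{\cdot i})$, $\sum_g p_{gi}=\mathbf q^\top\mathbf x_i$, $u_{1i}\overline P_1\le p_{1i}\le\overline P_1$, $u_{gi}\overline P_g\le p_{gi}\le u_{(g-1)i}\overline P_g$ and $u_{gi}\le u_{(g-1)i}$ for $g\ge2$, for all $i$. Then the feasible set of the bilevel problem equals the projection of the feasible set of the MILP onto the variables $(\mathbf q,p,r^{\mathrm u},r^{\mathrm d},f)$; consequently both problems have the same optimal value, and a vector $\mathbf q$ (together with the remaining variables) is optimal for the bilevel problem if and only if it is (the projection of) an optimal solution of the MILP.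
   Context: This is the training problem for an affine "prescription" $\widehat L=\mathbf q^\top\mathbf x$ of total system net demand used in a two-stage power scheduling: the forward stage dispatches units by cost-merit order to meet $\widehat L$, and the real-time stage adjusts production by up-regulation $r^{\mathrm u}$ and down-regulation $r^{\mathrm d}$ to meet the realized nodal net loads $L_{di}$ over a transport (pipeline) network with line flows $f_l$. Strictly ordered marginal costs $C_1<\dots<C_n$ are assumed so that the forward dispatch problem has a unique optimal solution whenever feasible. *)

theory Defs
  imports "HOL-Analysis.Analysis"
begin

record ('b, 'l, 'd) power_system =
  n_units :: nat
  C  :: "nat \<Rightarrow> real"
  Pmax :: "nat \<Rightarrow> real"
  Cu :: "nat \<Rightarrow> real"
  Cd :: "nat \<Rightarrow> real"
  Ru :: "nat \<Rightarrow> real"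
  Rd :: "nat \<Rightarrow> real"
  nodes :: "'b set"
  lines :: "'l set"
  orig :: "'l \<Rightarrow> 'b"
  dest :: "'l \<Rightarrow> 'b"
  Fmax :: "'l \<Rightarrow> real"
  units_at :: "'b \<Rightarrow> nat set"
  loads_at :: "'b \<Rightarrow> 'd set"

definition units :: "('b, 'l, 'd) power_system \<Rightarrow> nat set" where
  "units S = {1..n_units S}"

definition wf_system :: "('b, 'l, 'd) power_system \<Rightarrow> bool" where
  "wf_system S \<longleftrightarrow>
     (\<forall>g\<in>units S. \<forall>h\<in>units S. g < h \<longrightarrow> C S g < C S h) \<and>
     (\<forall>g\<in>units S. 0 \<le> Pmax S g \<and> 0 \<le> Ru S g \<and> 0 \<le> Rd S g) \<and>
     finite (nodes S) \<and> finite (lines S) \<and>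
     (\<forall>l\<in>lines S. orig S l \<in> nodes S \<and> dest S l \<in> nodes S \<and> 0 \<le> Fmax S l) \<and>
     (\<forall>b\<in>nodes S. units_at S b \<subseteq> units S \<and> finite (loads_at S b)) \<and>
     (\<Union>b\<in>nodes S. units_at S b) = units S \<and>
     (\<forall>b\<in>nodes S. \<forall>b'\<in>nodes S. b \<noteq> b' \<longrightarrow> units_at S b \<inter> units_at S b' = {})"

definition T_set ::
  "('b, 'l, 'd) power_system \<Rightarrow> ('d \<Rightarrow> nat \<Rightarrow> real) \<Rightarrow> nat \<Rightarrow> (nat \<Rightarrow> real)
    \<Rightarrow> ((nat \<Rightarrow> real) \<times> (nat \<Rightarrow> real) \<times> ('l \<Rightarrow> real)) set" where
  "T_set S L i p = {(ru, rd, f).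
     (\<forall>g\<in>units S. 0 \<le> ru g \<and> 0 \<le> rd g \<and>
        0 \<le> p g + ru g - rd g \<and> p g + ru g - rd g \<le> Pmax S g \<and>
        ru g \<le> Ru S g \<and> rd g \<le> Rd S g) \<and>
     (\<forall>b\<in>nodes S. (\<Sum>g\<in>units_at S b. p g + ru g - rd g) =
        (\<Sum>d\<in>loads_at S b. L d i)
        + (\<Sum>l\<in>{l\<in>lines S. orig S l = b}. f l)
        - (\<Sum>l\<in>{l\<in>lines S. dest S l = b}. f l)) \<and>
     (\<forall>l\<in>lines S. \<bar>f l\<bar> \<le> Fmax S l)}"

definition forward_feasible :: "('b, 'l, 'd) power_system \<Rightarrow> real \<Rightarrow> (nat \<Rightarrow> real) \<Rightarrow> bool" where
  "forward_feasible S Lhat p \<longleftrightarrow>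
     (\<Sum>g\<in>units S. p g) = Lhat \<and> (\<forall>g\<in>units S. 0 \<le> p g \<and> p g \<le> Pmax S g)"

definition forward_cost :: "('b, 'l, 'd) power_system \<Rightarrow> (nat \<Rightarrow> real) \<Rightarrow> real" where
  "forward_cost S p = (\<Sum>g\<in>units S. C S g * p g)"

type_synonym ('k, 'l) decision =
  "(real^'k) \<times> (nat \<Rightarrow> nat \<Rightarrow> real) \<times> (nat \<Rightarrow> nat \<Rightarrow> real) \<times> (nat \<Rightarrow> nat \<Rightarrow> real) \<times> ('l \<Rightarrow> nat \<Rightarrow> real)"

text \<open>Decision (q, p, ru, rd, f) with p g i, ru g i, rd g i, f l i.
  Data: N samples, features x i, loads L d i, for i = 1..N.\<close>

definition objective :: "('b, 'l, 'd) power_system \<Rightarrow> nat \<Rightarrow> ('k, 'l) decision \<Rightarrow> real" where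
  "objective S N v = (case v of (q, p, ru, rd, f) \<Rightarrow>
     (1 / real N) * (\<Sum>i=1..N. \<Sum>g\<in>units S. C S g * p g i + Cu S g * ru g i - Cd S g * rd g i))"

definition bilevel_feasible ::
  "('b, 'l, 'd) power_system \<Rightarrow> nat \<Rightarrow> (nat \<Rightarrow> real^'k) \<Rightarrow> ('d \<Rightarrow> nat \<Rightarrow> real)
     \<Rightarrow> ('k, 'l) decision \<Rightarrow> bool" where
  "bilevel_feasible S N x L v = (case v of (q, p, ru, rd, f) \<Rightarrow>
     (\<forall>i\<in>{1..N}.
        ((\<lambda>g. ru g i), (\<lambda>g. rd g i), (\<lambda>l. f l i)) \<in> T_set S L i (\<lambda>g. p g i) \<and>
        is_arg_min (forward_cost S) (forward_feasible S (q \<bullet> x i)) (\<lambda>g. p g i)))"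

definition milp_feasible ::
  "('b, 'l, 'd) power_system \<Rightarrow> nat \<Rightarrow> (nat \<Rightarrow> real^'k) \<Rightarrow> ('d \<Rightarrow> nat \<Rightarrow> real)
     \<Rightarrow> ('k, 'l) decision \<times> (nat \<Rightarrow> nat \<Rightarrow> real) \<Rightarrow> bool" where
  "milp_feasible S N x L w = (case w of ((q, p, ru, rd, f), u) \<Rightarrow>
     (\<forall>i\<in>{1..N}.
        ((\<lambda>g. ru g i), (\<lambda>g. rd g i), (\<lambda>l. f l i)) \<in> T_set S L i (\<lambda>g. p g i) \<and>
        (\<Sum>g\<in>units S. p g i) = q \<bullet> x i \<and>
        (\<forall>g\<in>units S. u g i \<in> {0, 1}) \<and>
        (1 \<in> units S \<longrightarrow> u 1 i * Pmax S 1 \<le> p 1 i \<and> p 1 i \<le> Pmax S 1) \<and>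
        (\<forall>g\<in>units S. 2 \<le> g \<longrightarrow>
            u g i * Pmax S g \<le> p g i \<and> p g i \<le> u (g - 1) i * Pmax S g \<and>
            u g i \<le> u (g - 1) i)))"

end

theory Submission
  imports Defs
begin

definition loc :: "('b, 'l, 'd) power_system \<Rightarrow> (nat \<Rightarrow> real) \<Rightarrow> (nat \<Rightarrow> real) \<Rightarrow> bool" where
  "loc S p u \<longleftrightarrow> (\<forall>g\<in>units S. u g \<in> {0, 1}) \<and>
        (1 \<in> units S \<longrightarrow> u 1 * Pmax S 1 \<le> p 1 \<and> p 1 \<le> Pmax S 1) \<and>
        (\<forall>g\<in>units S. 2 \<le> g \<longrightarrow>
            u g * Pmax S g \<le> p g \<and> p g \<le> u (g - 1) * Pmax S g \<and>
            u g \<le> u (g - 1))"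

definition pw :: "('b, 'l, 'd) power_system \<Rightarrow> (nat \<Rightarrow> real) \<Rightarrow> bool" where
  "pw S p \<longleftrightarrow> (\<forall>g\<in>units S. \<forall>h\<in>units S. g < h \<longrightarrow> p g < Pmax S g \<longrightarrow> p h = 0)"

lemma fin_units[simp]: "finite (units S)" by (simp add: units_def)

lemma exchange:
  assumes wf: "wf_system S" and am: "is_arg_min (forward_cost S) (forward_feasible S Lh) p"
  shows "pw S p"
  unfolding pw_def
proof (intro ballI impI, rule ccontr)
  fix g h assume g: "g \<in> units S" and h: "h \<in> units S" and gh: "g < h"
    and lt: "p g < Pmax S g" and nz: "p h \<noteq> 0"
  have feas: "forward_feasible S Lh p" using am by (simp add: is_arg_min_def)
  hence ph: "p h > 0" using h nz by (force simp: forward_feasible_def)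
  define e where "e = min (Pmax S g - p g) (p h)"
  have e: "e > 0" "e \<le> Pmax S g - p g" "e \<le> p h" using lt ph by (auto simp: e_def)
  define p' where "p' = (\<lambda>j. p j + (if j = g then e else 0) - (if j = h then e else 0))"
  have gneh: "g \<noteq> h" using gh by simp
  have "(\<Sum>j\<in>units S. p' j) = (\<Sum>j\<in>units S. p j) + e - e"
    unfolding p'_def using g h by (simp add: sum.distrib sum_subtractf)
  moreover have "\<forall>j\<in>units S. 0 \<le> p' j \<and> p' j \<le> Pmax S j"
    using feas e gneh unfolding p'_def forward_feasible_def by auto
  ultimately have f': "forward_feasible S Lh p'" using feas by (simp add: forward_feasible_def)
  have "forward_cost S p' = (\<Sum>j\<in>units S. C S j * p j + (if j = g then C S j * e else 0) - (if j = h then C S j * e else 0))"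
    unfolding forward_cost_def p'_def by (rule sum.cong) (auto simp: algebra_simps)
  also have "\<dots> = forward_cost S p + C S g * e - C S h * e"
    unfolding forward_cost_def using g h by (simp only: sum.distrib sum_subtractf) (simp add: sum.delta)
  finally have "forward_cost S p' = forward_cost S p + C S g * e - C S h * e" .
  moreover have cgh: "C S g < C S h" using wf g h gh by (auto simp: wf_system_def)
  moreover have "C S g * e < C S h * e" using cgh e(1) by simp
  ultimately have "forward_cost S p' < forward_cost S p" by linarith
  with f' am show False by (auto simp: is_arg_min_def)
qed

lemma weighted:
  fixes d w :: "nat \<Rightarrow> real"
  assumes "finite A" "(\<Sum>g\<in>A. d g) = 0"
    "\<forall>g\<in>A. d g < 0 \<longrightarrow> w g \<le> c" "\<forall>g\<in>A. d g > 0 \<longrightarrow> w g \<ge> c"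
  shows "(\<Sum>g\<in>A. w g * d g) \<ge> 0"
proof -
  have "\<forall>g\<in>A. c * d g \<le> w g * d g"
  proof
    fix g assume g: "g \<in> A"
    show "c * d g \<le> w g * d g"
    proof (cases "d g < 0")
      case True thus ?thesis using assms g by (simp add: mult_right_mono_neg)
    next
      case False thus ?thesis using assms g
        by (cases "d g = 0") (auto intro: mult_right_mono)
    qed
  qed
  hence "(\<Sum>g\<in>A. c * d g) \<le> (\<Sum>g\<in>A. w g * d g)" by (intro sum_mono) auto
  thus ?thesis using assms by (simp add: sum_distrib_left[symmetric])
qed

lemma opt:
  assumes wf: "wf_system S" and feas: "forward_feasible S Lh p" and pw: "pw S p"
  shows "is_arg_min (forward_cost S) (forward_feasible S Lh) p"
  unfolding is_arg_min_def
proof (intro conjI feas notI)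
  assume "\<exists>y. forward_feasible S Lh y \<and> forward_cost S y < forward_cost S p"
  then obtain q where fq: "forward_feasible S Lh q" and lt: "forward_cost S q < forward_cost S p" by blast
  define d where "d = (\<lambda>g. q g - p g)"
  have sd: "(\<Sum>g\<in>units S. d g) = 0" using feas fq
    by (simp add: d_def sum_subtractf forward_feasible_def)
  have mono: "\<And>g h. g \<in> units S \<Longrightarrow> h \<in> units S \<Longrightarrow> g \<le> h \<Longrightarrow> C S g \<le> C S h"
    using wf unfolding wf_system_def by (metis order_le_less order_refl)
  obtain c where c1: "\<forall>g\<in>units S. d g < 0 \<longrightarrow> C S g \<le> c" and c2: "\<forall>g\<in>units S. d g > 0 \<longrightarrow> C S g \<ge> c"
  proof (cases "\<exists>g\<in>units S. p g < Pmax S g")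
    case True
    define k where "k = (LEAST g. g \<in> units S \<and> p g < Pmax S g)"
    have k: "k \<in> units S" "p k < Pmax S k" using True unfolding k_def
      by (metis (mono_tags, lifting) LeastI)+
    have full: "\<And>g. g \<in> units S \<Longrightarrow> g < k \<Longrightarrow> p g = Pmax S g"
    proof -
      fix g assume "g \<in> units S" "g < k"
      hence "\<not> p g < Pmax S g" unfolding k_def using not_less_Least by blast
      thus "p g = Pmax S g" using feas \<open>g \<in> units S\<close> by (force simp: forward_feasible_def)
    qed
    have zero: "\<And>g. g \<in> units S \<Longrightarrow> k < g \<Longrightarrow> p g = 0" using pw k unfolding pw_def by blast
    show ?thesis
    proof (rule that[of "C S k"])
      show "\<forall>g\<in>units S. d g < 0 \<longrightarrow> C S g \<le> C S k"
      proof (intro ballI impI)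
        fix g assume g: "g \<in> units S" "d g < 0"
        have "\<not> k < g" using zero[of g] g fq by (force simp: d_def forward_feasible_def)
        thus "C S g \<le> C S k" using mono g k by simp
      qed
      show "\<forall>g\<in>units S. d g > 0 \<longrightarrow> C S g \<ge> C S k"
      proof (intro ballI impI)
        fix g assume g: "g \<in> units S" "d g > 0"
        have "\<not> g < k" using full[of g] g fq by (force simp: d_def forward_feasible_def)
        thus "C S g \<ge> C S k" using mono g k by simp
      qed
    qed
  next
    case False
    show ?thesis
    proof (rule that[of "\<Sum>g\<in>units S. \<bar>C S g\<bar>"])
      show "\<forall>g\<in>units S. d g < 0 \<longrightarrow> C S g \<le> (\<Sum>g\<in>units S. \<bar>C S g\<bar>)"
      proof (intro ballI impI)
        fix g assume g: "g \<in> units S"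
        have "\<bar>C S g\<bar> \<le> (\<Sum>g\<in>units S. \<bar>C S g\<bar>)"
          by (rule member_le_sum) (use g in auto)
        thus "C S g \<le> (\<Sum>g\<in>units S. \<bar>C S g\<bar>)" by linarith
      qed
      show "\<forall>g\<in>units S. d g > 0 \<longrightarrow> C S g \<ge> (\<Sum>g\<in>units S. \<bar>C S g\<bar>)"
        using False feas fq by (force simp: d_def forward_feasible_def)
    qed
  qed
  have "(\<Sum>g\<in>units S. C S g * d g) \<ge> 0" by (rule weighted[OF fin_units sd c1 c2])
  hence "forward_cost S q \<ge> forward_cost S p"
    by (simp add: forward_cost_def d_def right_diff_distrib sum_subtractf)
  with lt show False by simp
qed

lemma u_mono:
  assumes l: "loc S p u" and g: "1 \<le> g"
  shows "j \<le> n_units S \<Longrightarrow> g \<le> j \<Longrightarrow> u j \<le> u g"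
proof (induction j)
  case 0 thus ?case using g by simp
next
  case (Suc j)
  show ?case
  proof (cases "g = Suc j")
    case True thus ?thesis by simp
  next
    case False
    hence "g \<le> j" using Suc by simp
    hence "u j \<le> u g" using Suc by simp
    moreover have "u (Suc j) \<le> u j"
    proof -
      have "Suc j \<in> units S" "2 \<le> Suc j" using Suc.prems g \<open>g \<le> j\<close> by (auto simp: units_def)
      moreover have "\<forall>g\<in>units S. 2 \<le> g \<longrightarrow> u g \<le> u (g - 1)" using l unfolding loc_def by blast
      ultimately show ?thesis by fastforce
    qed
    ultimately show ?thesis by simp
  qed
qed

lemma loc_to_opt:
  assumes wf: "wf_system S" and l: "loc S p u" and s: "(\<Sum>g\<in>units S. p g) = Lh"
  shows "is_arg_min (forward_cost S) (forward_feasible S Lh) p"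
proof (rule opt[OF wf])
  have P0: "\<forall>g\<in>units S. 0 \<le> Pmax S g" using wf by (simp add: wf_system_def)
  have lB: "\<forall>g\<in>units S. 2 \<le> g \<longrightarrow>
            u g * Pmax S g \<le> p g \<and> p g \<le> u (g - 1) * Pmax S g \<and> u g \<le> u (g - 1)"
    and lA: "1 \<in> units S \<longrightarrow> u 1 * Pmax S 1 \<le> p 1 \<and> p 1 \<le> Pmax S 1"
    and l01: "\<forall>g\<in>units S. u g \<in> {0, 1}"
    using l unfolding loc_def by blast+
  have bnd: "\<forall>g\<in>units S. 0 \<le> p g \<and> p g \<le> Pmax S g"
  proof
    fix g assume g: "g \<in> units S"
    have u01: "u g \<in> {0,1}" using l01 g by blast
    have pg: "0 \<le> Pmax S g" using P0 g by blast
    have up: "0 \<le> u g * Pmax S g" using u01 pg by auto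
    show "0 \<le> p g \<and> p g \<le> Pmax S g"
    proof (cases "g = 1")
      case True thus ?thesis using lA g up by simp
    next
      case False
      hence g2: "2 \<le> g" using g by (simp add: units_def)
      hence "g - 1 \<in> units S" using g by (auto simp: units_def)
      hence "u (g-1) \<in> {0,1}" using l01 by blast
      hence "u (g-1) * Pmax S g \<le> Pmax S g" using pg by auto
      moreover have "u g * Pmax S g \<le> p g \<and> p g \<le> u (g - 1) * Pmax S g" using lB g g2 by blast
      ultimately show ?thesis using up by linarith
    qed
  qed
  thus "forward_feasible S Lh p" using s by (simp add: forward_feasible_def)
  show "pw S p" unfolding pw_def
  proof (intro ballI impI)
    fix g h assume g: "g \<in> units S" and h: "h \<in> units S" and gh: "g < h" and lt: "p g < Pmax S g"
    have lB: "\<forall>g\<in>units S. 2 \<le> g \<longrightarrow>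
            u g * Pmax S g \<le> p g \<and> p g \<le> u (g - 1) * Pmax S g \<and> u g \<le> u (g - 1)"
      and lA: "1 \<in> units S \<longrightarrow> u 1 * Pmax S 1 \<le> p 1 \<and> p 1 \<le> Pmax S 1"
      and l01: "\<forall>g\<in>units S. u g \<in> {0, 1}"
      using l unfolding loc_def by blast+
    have ug: "u g = 0"
    proof -
      have "u g \<in> {0,1}" using l01 g by blast
      moreover have "u g * Pmax S g \<le> p g"
      proof (cases "g = 1")
        case True thus ?thesis using lA g by simp
      next
        case False hence "2 \<le> g" using g by (simp add: units_def)
        thus ?thesis using lB g by blast
      qed
      ultimately show ?thesis using lt by auto
    qed
    have h2: "2 \<le> h" using g gh by (simp add: units_def)
    have g1: "1 \<le> g" "h - 1 \<le> n_units S" "g \<le> h - 1" using g h gh by (auto simp: units_def)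
    have "u (h - 1) \<le> u g" by (rule u_mono[OF l g1])
    moreover have "h - 1 \<in> units S" using h h2 by (auto simp: units_def)
    hence "u (h-1) \<in> {0,1}" using l01 by blast
    ultimately have "u (h-1) = 0" using ug by auto
    moreover have "p h \<le> u (h-1) * Pmax S h" using lB h h2 by blast
    ultimately have "p h \<le> 0" by simp
    thus "p h = 0" using bnd h by (meson order_antisym)
  qed
qed

definition uof :: "('b, 'l, 'd) power_system \<Rightarrow> (nat \<Rightarrow> real) \<Rightarrow> nat \<Rightarrow> real" where
  "uof S p g = (if \<forall>h\<in>units S. h \<le> g \<longrightarrow> p h = Pmax S h then 1 else 0)"

lemma opt_to_loc:
  assumes wf: "wf_system S" and am: "is_arg_min (forward_cost S) (forward_feasible S Lh) p"
  shows "loc S p (uof S p) \<and> (\<Sum>g\<in>units S. p g) = Lh"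
proof -
  have pw: "pw S p" by (rule exchange[OF wf am])
  have feas: "forward_feasible S Lh p" using am by (simp add: is_arg_min_def)
  have P0: "\<forall>g\<in>units S. 0 \<le> Pmax S g" using wf by (simp add: wf_system_def)
  have A: "1 \<in> units S \<longrightarrow> uof S p 1 * Pmax S 1 \<le> p 1 \<and> p 1 \<le> Pmax S 1"
    using feas by (auto simp: uof_def forward_feasible_def)
  have B: "\<forall>g\<in>units S. 2 \<le> g \<longrightarrow>
            uof S p g * Pmax S g \<le> p g \<and> p g \<le> uof S p (g - 1) * Pmax S g \<and>
            uof S p g \<le> uof S p (g - 1)"
  proof (intro ballI impI conjI)
    fix g assume g: "g \<in> units S" "2 \<le> g"
    show "uof S p g * Pmax S g \<le> p g" using feas g by (auto simp: uof_def forward_feasible_def)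
    show "uof S p g \<le> uof S p (g - 1)" by (auto simp: uof_def)
    show "p g \<le> uof S p (g - 1) * Pmax S g"
    proof (cases "\<forall>h\<in>units S. h \<le> g - 1 \<longrightarrow> p h = Pmax S h")
      case True thus ?thesis using feas g by (auto simp: uof_def forward_feasible_def)
    next
      case False
      then obtain h where h: "h \<in> units S" "h \<le> g - 1" "p h \<noteq> Pmax S h" by blast
      hence "p h < Pmax S h" using feas by (force simp: forward_feasible_def)
      hence "p g = 0" using pw h g unfolding pw_def by force
      moreover have "uof S p (g - 1) = 0" using False unfolding uof_def by (simp only: if_False)
      ultimately show ?thesis by simp
    qed
  qed
  show ?thesis using A B feas by (simp add: loc_def uof_def forward_feasible_def)
qed

lemma milp_loc:
  "milp_feasible S N x L ((q, p, ru, rd, f), u) \<longleftrightarrow>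
     (\<forall>i\<in>{1..N}. ((\<lambda>g. ru g i), (\<lambda>g. rd g i), (\<lambda>l. f l i)) \<in> T_set S L i (\<lambda>g. p g i) \<and>
        (\<Sum>g\<in>units S. p g i) = q \<bullet> x i \<and> loc S (\<lambda>g. p g i) (\<lambda>g. u g i))"
  by (simp add: milp_feasible_def loc_def)

lemma sets_eq:
  assumes wf: "wf_system S"
  shows "{v. bilevel_feasible S N x L v} = fst ` {w. milp_feasible S N x L w}"
proof (intro equalityI subsetI)
  fix v assume "v \<in> {v. bilevel_feasible S N x L v}"
  then obtain q p ru rd f where v: "v = (q, p, ru, rd, f)" and b: "bilevel_feasible S N x L (q, p, ru, rd, f)"
    by (cases v) auto
  define u where "u = (\<lambda>g i. uof S (\<lambda>g. p g i) g)"
  have "milp_feasible S N x L ((q, p, ru, rd, f), u)"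
    unfolding milp_loc u_def using b opt_to_loc[OF wf] by (auto simp: bilevel_feasible_def)
  thus "v \<in> fst ` {w. milp_feasible S N x L w}" using v by force
next
  fix v assume "v \<in> fst ` {w. milp_feasible S N x L w}"
  then obtain q p ru rd f u where v: "v = (q, p, ru, rd, f)" and m: "milp_feasible S N x L ((q, p, ru, rd, f), u)"
    by force
  have "bilevel_feasible S N x L (q, p, ru, rd, f)"
    using m loc_to_opt[OF wf] unfolding milp_loc by (auto simp: bilevel_feasible_def)
  thus "v \<in> {v. bilevel_feasible S N x L v}" using v by simp
qed

theorem mainTheorem2:
  fixes S :: "('b, 'l, 'd) power_system"
    and N :: nat
    and x :: "nat \<Rightarrow> real^'k"
    and L :: "'d \<Rightarrow> nat \<Rightarrow> real"
  assumes "wf_system S"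
    and "1 \<le> N"
  shows "{v. bilevel_feasible S N x L v} = fst ` {w. milp_feasible S N x L w} \<and>
         (INF v\<in>{v. bilevel_feasible S N x L v}. objective S N v)
           = (INF w\<in>{w. milp_feasible S N x L w}. objective S N (fst w)) \<and>
         (\<forall>v. is_arg_min (objective S N) (bilevel_feasible S N x L) v \<longleftrightarrow>
           (\<exists>w. fst w = v \<and> is_arg_min (\<lambda>w. objective S N (fst w)) (milp_feasible S N x L) w))"
proof -
  have E: "{v. bilevel_feasible S N x L v} = fst ` {w. milp_feasible S N x L w}"
    by (rule sets_eq[OF assms(1)])
  have E': "\<And>v. bilevel_feasible S N x L v \<longleftrightarrow> (\<exists>w. milp_feasible S N x L w \<and> fst w = v)"
    using E by (auto simp: set_eq_iff image_iff)
  have I: "(INF v\<in>{v. bilevel_feasible S N x L v}. objective S N v)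
           = (INF w\<in>{w. milp_feasible S N x L w}. objective S N (fst w))"
    unfolding E image_image by simp
  have A: "\<forall>v. is_arg_min (objective S N) (bilevel_feasible S N x L) v \<longleftrightarrow>
           (\<exists>w. fst w = v \<and> is_arg_min (\<lambda>w. objective S N (fst w)) (milp_feasible S N x L) w)"
    unfolding is_arg_min_def E' by blast
  show ?thesis using E I A by blast
qed

end
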